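(* Let $n\ge1$, let $\Lambda$ be a completely positive trace-preserving (CPTP) map on operators on $\mathcal{H}=(\mathbb{C}^3)^{\otimes n}$, and suppose every Pauli $P\in\mathbb{P}_n$ is implemented noisily as $\hat{\mathcal{P}}=\mathcal{P}\circ\Lambda$ (gate-independent noise). Let $\hat\rho_0$ be a (noisy) initial state and $\hat\Pi_c$ a (noisy) Hermitian measurement effect on $\mathcal{H}$, and for $m\ge1$ define the LRB average $$p_{\Pi_c}(m)=\frac{1}{|\mathbb{P}_n|^m}\sum_{P_1,\dots,P_m\in\mathbb{P}_n}\operatorname{tr}\big(\hat\Pi_c\,\hat{\mathcal{P}}_m\circ\cdots\circ\hat{\mathcal{P}}_1(\hat\rho_0)\big).$$ Let $Q=Q_\Lambda$ be the $2^n\times 2^n$ matrix indexed by $\{c,l\}^n$ with entries $Q_{\bm i,\bm j}=\operatorname{tr}(\Pi_{\bm i}\Lambda(\widetilde{\Pi}_{\bm j}))$. Then there is a state $\tilde\rho_0$ on $\mathcal{H}$ determined by $\hat\rho_0$ (and $\Lambda$) such that for every $m\ge1$ $$p_{\Pi_c}(m)=\sum_{\bm i,\bm j\in\{c,l\}^n}\operatorname{tr}(\widetilde{\Pi}_{\bm i}\hat\Pi_c)\,(Q^{m-1})_{\bm i,\bm j}\,\operatorname{tr}(\Pi_{\bm j}\tilde\rho_0).$$ Moreover the average leakage rate of $\Lambda$ equals $L_{\mathrm{ave}}(\Lambda)=1-Q_{c^n,c^n}$ and the average seepage rate equals $S_{\mathrm{ave}}(\Lambda)=\frac{1}{3^n-2^n}\sum_{\bm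 i\ne c^n}\dim(\mathcal{H}_{\bm i})\,Q_{c^n,\bm i}$, where $c^n=(c,\dots,c)$.
   Context: A single qubit with leakage is $\mathbb{C}^3$ with basis $\{|0\rangle,|1\rangle,|2\rangle\}$; single-qubit projectors $\Pi_c=|0\rangle\langle0|+|1\rangle\langle1|$ (computational) and $\Pi_l=|2\rangle\langle2|$ (leakage). For $\bm i\in\{c,l\}^n$, $\Pi_{\bm i}=\bigotimes_k\Pi_{i_k}$ with range $\mathcal{H}_{\bm i}$ and $\widetilde{\Pi}_{\bm i}=\Pi_{\bm i}/\dim(\mathcal{H}_{\bm i})$. The $n$-qubit computational projector is $\Pi_c:=\Pi_{c^n}$ (rank $2^n$), the leakage projector is $\Pi_l:=\mathbb{I}-\Pi_c$ (rank $3^n-2^n$), and $\widetilde{\Pi}_c=\Pi_c/2^n$, $\widetilde{\Pi}_l=\Pi_l/(3^n-2^n)$. The average leakage and seepage rates of a channel $\Lambda$ are $L_{\mathrm{ave}}(\Lambda)=\operatorname{tr}(\Pi_l\Lambda(\widetilde{\Pi}_c))$ and $S_{\mathrm{ave}}(\Lambda)=\operatorname{tr}(\Pi_c\Lambda(\widetilde{\Pi}_l))$. Pauli group: $\mathbb{P}=\{\pm1,\pm\mathrm{i}\}\times\{I,X,Y,Z\}$, $\mathbb{P}_n=\mathbb{P}^{\times n}$; for $U\in\mathbb{P}$ the qutrit channel is $\rho\mapsto(U\oplus1)\rho(U\oplus1)^\dagger$ ($U$ on $\operatorname{span}\{|0\rangle,|1\rangle\}$, identity on $|2\rangle$), and for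 $P=(P_1,\dots,P_n)$ the ideal channel $\mathcal{P}$ is the tensor product of these. *)

theory Defs
  imports Complex_Main
begin

type_synonym 'a op = "'a \<Rightarrow> 'a \<Rightarrow> complex"

definition basis :: "nat \<Rightarrow> nat list set" where
  "basis n = {x. length x = n \<and> set x \<subseteq> {0,1,2}}"

definition supp_on :: "'a set \<Rightarrow> 'a op \<Rightarrow> bool" where
  "supp_on S A \<longleftrightarrow> (\<forall>x y. (x \<notin> S \<or> y \<notin> S) \<longrightarrow> A x y = 0)"

definition opsp :: "nat \<Rightarrow> nat list op set" where
  "opsp n = {A. supp_on (basis n) A}"

definition mtr :: "'a set \<Rightarrow> 'a op \<Rightarrow> complex" where
  "mtr S A = (\<Sum>x\<in>S. A x x)"

definition mmul :: "'a set \<Rightarrow> 'a op \<Rightarrow> 'a op \<Rightarrow> 'a op" where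
  "mmul S A B = (\<lambda>x y. \<Sum>z\<in>S. A x z * B z y)"

definition madj :: "'a op \<Rightarrow> 'a op" where
  "madj A = (\<lambda>x y. cnj (A y x))"

definition hermitian_on :: "'a set \<Rightarrow> 'a op \<Rightarrow> bool" where
  "hermitian_on S A \<longleftrightarrow> (\<forall>x\<in>S. \<forall>y\<in>S. A x y = cnj (A y x))"

definition psd_on :: "'a set \<Rightarrow> 'a op \<Rightarrow> bool" where
  "psd_on S A \<longleftrightarrow> (\<forall>v::'a \<Rightarrow> complex.
      let q = (\<Sum>x\<in>S. \<Sum>y\<in>S. cnj (v x) * A x y * v y) in Im q = 0 \<and> Re q \<ge> 0)"

definition is_state :: "nat \<Rightarrow> nat list op \<Rightarrow> bool" where
  "is_state n \<rho> \<longleftrightarrow> \<rho> \<in> opsp n \<and> psd_on (basis n) \<rho> \<and> mtr (basis n) \<rho> = 1"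

type_synonym chan = "nat list op \<Rightarrow> nat list op"

definition linear_on_ops :: "nat \<Rightarrow> chan \<Rightarrow> bool" where
  "linear_on_ops n \<Lambda> \<longleftrightarrow> (\<forall>A\<in>opsp n. \<forall>B\<in>opsp n. \<forall>a b::complex.
      \<Lambda> (\<lambda>x y. a * A x y + b * B x y) = (\<lambda>x y. a * \<Lambda> A x y + b * \<Lambda> B x y))"

text \<open>Ancilla extension id_d tensor Lambda acting on operators indexed by {0..<d} x basis n.\<close>
definition ampl :: "chan \<Rightarrow> (nat \<times> nat list) op \<Rightarrow> (nat \<times> nat list) op" where
  "ampl \<Lambda> X = (\<lambda>(a,x) (b,y). \<Lambda> (\<lambda>x' y'. X (a,x') (b,y')) x y)"

definition completely_positive :: "nat \<Rightarrow> chan \<Rightarrow> bool" where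
  "completely_positive n \<Lambda> \<longleftrightarrow> (\<forall>d::nat. \<forall>X.
      supp_on ({0..<d} \<times> basis n) X \<and> psd_on ({0..<d} \<times> basis n) X \<longrightarrow>
      psd_on ({0..<d} \<times> basis n) (ampl \<Lambda> X))"

definition trace_preserving :: "nat \<Rightarrow> chan \<Rightarrow> bool" where
  "trace_preserving n \<Lambda> \<longleftrightarrow> (\<forall>A\<in>opsp n. mtr (basis n) (\<Lambda> A) = mtr (basis n) A)"

definition cptp :: "nat \<Rightarrow> chan \<Rightarrow> bool" where
  "cptp n \<Lambda> \<longleftrightarrow> (\<forall>A\<in>opsp n. \<Lambda> A \<in> opsp n) \<and> linear_on_ops n \<Lambda>
      \<and> completely_positive n \<Lambda> \<and> trace_preserving n \<Lambda>"

text \<open>A single-qubit Pauli in P = {+-1,+-i} x {I,X,Y,Z} is encoded as (k,p) with k,p < 4: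
  phase i^k and Pauli matrix sigma_p (0=I,1=X,2=Y,3=Z).\<close>

definition sigma :: "nat \<Rightarrow> nat \<Rightarrow> nat \<Rightarrow> complex" where
  "sigma p a b =
    (if p = 0 then (if a = b then 1 else 0)
     else if p = 1 then (if a \<noteq> b then 1 else 0)
     else if p = 2 then (if a = 0 \<and> b = 1 then - \<i> else if a = 1 \<and> b = 0 then \<i> else 0)
     else (if a = b then (if a = 0 then 1 else -1) else 0))"

definition pauli_qutrit :: "nat \<times> nat \<Rightarrow> nat \<Rightarrow> nat \<Rightarrow> complex" where
  "pauli_qutrit U a b =
    (if a < 2 \<and> b < 2 then \<i> ^ fst U * sigma (snd U) a b
     else if a = 2 \<and> b = 2 then 1 else 0)"

definition pauli1 :: "(nat \<times> nat) set" where
  "pauli1 = {0..<4} \<times> {0..<4}"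

definition pauli_grp :: "nat \<Rightarrow> (nat \<times> nat) list set" where
  "pauli_grp n = {P. length P = n \<and> set P \<subseteq> pauli1}"

definition pauli_op :: "nat \<Rightarrow> (nat \<times> nat) list \<Rightarrow> nat list op" where
  "pauli_op n P = (\<lambda>x y. if x \<in> basis n \<and> y \<in> basis n
      then (\<Prod>k<n. pauli_qutrit (P ! k) (x ! k) (y ! k)) else 0)"

definition pauli_chan :: "nat \<Rightarrow> (nat \<times> nat) list \<Rightarrow> chan" where
  "pauli_chan n P \<rho> = mmul (basis n) (mmul (basis n) (pauli_op n P) \<rho>) (madj (pauli_op n P))"

fun noisy_seq :: "nat \<Rightarrow> chan \<Rightarrow> (nat \<times> nat) list list \<Rightarrow> nat list op \<Rightarrow> nat list op" where
  "noisy_seq n \<Lambda> [] \<rho> = \<rho>"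
| "noisy_seq n \<Lambda> (P # Ps) \<rho> = noisy_seq n \<Lambda> Ps (pauli_chan n P (\<Lambda> \<rho>))"

definition lrb_avg :: "nat \<Rightarrow> chan \<Rightarrow> nat list op \<Rightarrow> nat list op \<Rightarrow> nat \<Rightarrow> complex" where
  "lrb_avg n \<Lambda> E \<rho>0 m =
     (1 / of_nat (card (pauli_grp n)) ^ m) *
     (\<Sum>Ps\<in>{Ps. length Ps = m \<and> set Ps \<subseteq> pauli_grp n}.
        mtr (basis n) (mmul (basis n) E (noisy_seq n \<Lambda> Ps \<rho>0)))"

datatype cl = Cc | Ll

definition idx :: "nat \<Rightarrow> cl list set" where
  "idx n = {i. length i = n}"

definition in_sector :: "nat \<Rightarrow> cl list \<Rightarrow> nat list \<Rightarrow> bool" where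
  "in_sector n i x \<longleftrightarrow> x \<in> basis n \<and> (\<forall>k<n. (x ! k < 2) \<longleftrightarrow> i ! k = Cc)"

definition proj :: "nat \<Rightarrow> cl list \<Rightarrow> nat list op" where
  "proj n i = (\<lambda>x y. if x = y \<and> in_sector n i x then 1 else 0)"

definition dimH :: "nat \<Rightarrow> cl list \<Rightarrow> nat" where
  "dimH n i = card {x. in_sector n i x}"

definition nproj :: "nat \<Rightarrow> cl list \<Rightarrow> nat list op" where
  "nproj n i = (\<lambda>x y. proj n i x y / of_nat (dimH n i))"

definition idop :: "nat \<Rightarrow> nat list op" where
  "idop n = (\<lambda>x y. if x = y \<and> x \<in> basis n then 1 else 0)"

definition Pi_c :: "nat \<Rightarrow> nat list op" where
  "Pi_c n = proj n (replicate n Cc)"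

definition Pi_l :: "nat \<Rightarrow> nat list op" where
  "Pi_l n = (\<lambda>x y. idop n x y - Pi_c n x y)"

definition nPi_c :: "nat \<Rightarrow> nat list op" where
  "nPi_c n = (\<lambda>x y. Pi_c n x y / 2 ^ n)"

definition nPi_l :: "nat \<Rightarrow> nat list op" where
  "nPi_l n = (\<lambda>x y. Pi_l n x y / (3 ^ n - 2 ^ n))"

definition L_ave :: "nat \<Rightarrow> chan \<Rightarrow> complex" where
  "L_ave n \<Lambda> = mtr (basis n) (mmul (basis n) (Pi_l n) (\<Lambda> (nPi_c n)))"

definition S_ave :: "nat \<Rightarrow> chan \<Rightarrow> complex" where
  "S_ave n \<Lambda> = mtr (basis n) (mmul (basis n) (Pi_c n) (\<Lambda> (nPi_l n)))"

definition Qmat :: "nat \<Rightarrow> chan \<Rightarrow> cl list \<Rightarrow> cl list \<Rightarrow> complex" where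
  "Qmat n \<Lambda> i j = mtr (basis n) (mmul (basis n) (proj n i) (\<Lambda> (nproj n j)))"

fun mpow :: "'a set \<Rightarrow> ('a \<Rightarrow> 'a \<Rightarrow> complex) \<Rightarrow> nat \<Rightarrow> 'a \<Rightarrow> 'a \<Rightarrow> complex" where
  "mpow S Q 0 = (\<lambda>i j. if i = j then 1 else 0)"
| "mpow S Q (Suc k) = (\<lambda>i j. \<Sum>l\<in>S. mpow S Q k i l * Q l j)"

end

theory Submission
  imports Defs
begin


lemma lists_set_eq: "{P. length P = n \<and> set P \<subseteq> A} = {xs. set xs \<subseteq> A \<and> length xs = n}"
  by auto

lemma sum_prod_lists:
  fixes f :: "nat \<Rightarrow> 'a \<Rightarrow> 'b::comm_semiring_1"
  assumes "finite A"
  shows "(\<Sum>P\<in>{P. length P = n \<and> set P \<subseteq> A}. \<Prod>k<n. f k (P!k)) = (\<Prod>k<n. \<Sum>a\<in>A. f k a)"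
  using assms
proof (induction n arbitrary: f)
  case 0
  have "{P. length P = 0 \<and> set P \<subseteq> A} = {[]}" by auto
  then show ?case by simp
next
  case (Suc n)
  have "(\<Sum>P\<in>{P. length P = Suc n \<and> set P \<subseteq> A}. \<Prod>k<Suc n. f k (P!k))
      = (\<Sum>(P,a)\<in>{xs. set xs \<subseteq> A \<and> length xs = n} \<times> A. \<Prod>k<Suc n. f k ((a#P)!k))"
    unfolding lists_set_eq lists_length_Suc_eq
    by (subst sum.reindex) (auto simp: inj_split_Cons intro!: sum.cong)
  also have "\<dots> = (\<Sum>P\<in>{xs. set xs \<subseteq> A \<and> length xs = n}. \<Sum>a\<in>A. f 0 a * (\<Prod>k<n. f (Suc k) (P!k)))"
    by (subst sum.cartesian_product[symmetric]) (simp only: prod.lessThan_Suc_shift nth_Cons_0 nth_Cons_Suc split_def fst_conv snd_conv)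
  also have "\<dots> = (\<Sum>a\<in>A. f 0 a) * (\<Sum>P\<in>{xs. set xs \<subseteq> A \<and> length xs = n}. (\<Prod>k<n. f (Suc k) (P!k)))"
    by (simp add: sum_distrib_left sum_distrib_right sum.swap[of _ A])
  also have "\<dots> = (\<Sum>a\<in>A. f 0 a) * (\<Prod>k<n. \<Sum>a\<in>A. f (Suc k) a)"
    using Suc.IH[of "\<lambda>k. f (Suc k)"] Suc.prems by (simp add: lists_set_eq)
  also have "\<dots> = (\<Prod>k<Suc n. \<Sum>a\<in>A. f k a)"
    by (simp only: prod.lessThan_Suc_shift)
  finally show ?case .
qed

definition tq :: "nat \<Rightarrow> nat \<Rightarrow> nat \<Rightarrow> nat \<Rightarrow> complex" where
  "tq a b c d = (if a = b \<and> c = d \<and> (a < 2 \<longleftrightarrow> c < 2) then (if a < 2 then 1/2 else 1) else 0)"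

lemma pauli1_sum: "pauli1 = (\<lambda>(k,p). (k,p)) ` ({0..<4} \<times> {0..<4})" by (simp add: pauli1_def)

lemma single_twirl:
  assumes "a \<in> {0,1,2}" "b \<in> {0,1,2}" "c \<in> {0,1,2}" "d \<in> {0,1,2}"
  shows "(\<Sum>U\<in>pauli1. pauli_qutrit U a c * cnj (pauli_qutrit U b d)) = 16 * tq a b c d"
proof -
  have e: "(\<Sum>U\<in>pauli1. g U) = (\<Sum>k<4. \<Sum>p<4. g (k,p))" for g :: "nat \<times> nat \<Rightarrow> complex"
    unfolding pauli1_def by (simp add: sum.cartesian_product lessThan_atLeast0)
  show ?thesis using assms unfolding e
    by (auto simp: numeral_eq_Suc pauli_qutrit_def sigma_def tq_def)
qed



definition sec :: "nat list \<Rightarrow> cl list" where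
  "sec x = map (\<lambda>a. if a < 2 then Cc else Ll) x"

definition cf :: "nat \<Rightarrow> nat list \<Rightarrow> complex" where
  "cf n x = (\<Prod>k<n. if x!k < 2 then 1/2 else 1)"

lemma finite_basis: "finite (basis n)"
proof -
  have "basis n = {xs. set xs \<subseteq> {0,1,2} \<and> length xs = n}" unfolding basis_def by auto
  then show ?thesis using finite_lists_length_eq[of "{0,1,2::nat}" n] by simp
qed

lemma basis_nth: "x \<in> basis n \<Longrightarrow> k < n \<Longrightarrow> x!k \<in> {0,1,2}"
  unfolding basis_def by (auto dest!: nth_mem)

lemma prod_ind: "(\<Prod>k<(n::nat). if P k then (1::complex) else 0) = (if \<forall>k<n. P k then 1 else 0)"
  by (induction n) (auto simp: less_Suc_eq)

lemma prod_tq: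
  assumes "x \<in> basis n" "y \<in> basis n" "w \<in> basis n" "z \<in> basis n"
  shows "(\<Prod>k<n. tq (x!k) (y!k) (w!k) (z!k)) = (if x = y \<and> w = z \<and> sec x = sec w then cf n x else 0)"
proof (cases "x = y \<and> w = z \<and> sec x = sec w")
  case True
  have len: "length x = n" "length w = n" using assms unfolding basis_def by auto
  have "\<And>k. k < n \<Longrightarrow> (x!k < 2 \<longleftrightarrow> w!k < 2)"
  proof -
    fix k assume k: "k < n"
    have "sec x ! k = sec w ! k" using True by metis
    then show "(x!k < 2 \<longleftrightarrow> w!k < 2)" using k len unfolding sec_def by (auto split: if_splits)
  qed
  then show ?thesis using True unfolding cf_def tq_def by (auto intro!: prod.cong)
next
  case False
  have len: "length x = n" "length w = n" "length y = n" "length z = n" using assms unfolding basis_def by auto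
  have "\<exists>k<n. tq (x!k) (y!k) (w!k) (z!k) = 0"
  proof (rule ccontr)
    assume "\<not> ?thesis"
    then have h: "\<And>k. k < n \<Longrightarrow> x!k = y!k \<and> w!k = z!k \<and> (x!k < 2 \<longleftrightarrow> w!k < 2)"
      unfolding tq_def by (metis (full_types) zero_neq_one divide_eq_0_iff zero_neq_numeral)
    have "x = y" using h len by (auto intro: nth_equalityI)
    moreover have "w = z" using h len by (auto intro: nth_equalityI)
    moreover have "sec x = sec w" using h len unfolding sec_def by (intro nth_equalityI) (auto, metis+)
    ultimately show False using False by simp
  qed
  then show ?thesis using False by (auto simp: prod_zero_iff)
qed

lemma pauli_grp_eq: "pauli_grp n = {P. length P = n \<and> set P \<subseteq> pauli1}"
  unfolding pauli_grp_def by simp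

lemma finite_pauli1: "finite pauli1" unfolding pauli1_def by simp

lemma pauli_sum:
  assumes "x \<in> basis n" "y \<in> basis n" "w \<in> basis n" "z \<in> basis n"
  shows "(\<Sum>P\<in>pauli_grp n. pauli_op n P x w * cnj (pauli_op n P y z))
        = 16^n * (if x = y \<and> w = z \<and> sec x = sec w then cf n x else 0)"
proof -
  have "(\<Sum>P\<in>pauli_grp n. pauli_op n P x w * cnj (pauli_op n P y z))
      = (\<Sum>P\<in>pauli_grp n. \<Prod>k<n. pauli_qutrit (P!k) (x!k) (w!k) * cnj (pauli_qutrit (P!k) (y!k) (z!k)))"
    using assms unfolding pauli_op_def by (simp add: prod.distrib cnj_prod)
  also have "\<dots> = (\<Prod>k<n. \<Sum>U\<in>pauli1. pauli_qutrit U (x!k) (w!k) * cnj (pauli_qutrit U (y!k) (z!k)))"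
    unfolding pauli_grp_eq by (rule sum_prod_lists[OF finite_pauli1])
  also have "\<dots> = (\<Prod>k<n. 16 * tq (x!k) (y!k) (w!k) (z!k))"
    using assms by (intro prod.cong refl single_twirl) (auto dest: basis_nth)
  also have "\<dots> = 16^n * (\<Prod>k<n. tq (x!k) (y!k) (w!k) (z!k))"
    by (simp add: prod.distrib)
  finally show ?thesis using prod_tq[OF assms] by simp
qed

lemma in_sector_iff:
  assumes "x \<in> basis n" "i \<in> idx n"
  shows "in_sector n i x \<longleftrightarrow> i = sec x"
proof -
  have len: "length x = n" "length i = n" using assms unfolding basis_def idx_def by auto
  show ?thesis
  proof
    assume h: "in_sector n i x"
    show "i = sec x" using h len unfolding in_sector_def sec_def
      by (intro nth_equalityI) (auto, (metis cl.exhaust)+)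
  next
    assume "i = sec x"
    then show "in_sector n i x" using assms len unfolding in_sector_def sec_def by auto
  qed
qed

lemma sec_idx: "x \<in> basis n \<Longrightarrow> sec x \<in> idx n"
  unfolding basis_def idx_def sec_def by auto

lemma finite_idx: "finite (idx n)"
proof -
  have "idx n = {xs. set xs \<subseteq> UNIV \<and> length xs = n}" unfolding idx_def by auto
  moreover have "finite (UNIV :: cl set)"
  proof -
    have "(UNIV :: cl set) = {Cc, Ll}" using cl.exhaust by auto
    then show ?thesis by (metis finite.emptyI finite.insertI)
  qed
  ultimately show ?thesis using finite_lists_length_eq[of "UNIV :: cl set" n] by simp
qed

lemma in_sector_basis: "in_sector n i x \<Longrightarrow> x \<in> basis n"
  unfolding in_sector_def by auto

lemma dimH_formula:
  assumes "i \<in> idx n"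
  shows "(of_nat (dimH n i) :: complex) = (\<Prod>k<n. if i!k = Cc then 2 else 1)"
proof -
  have S: "{z. in_sector n i z} = {z\<in>basis n. in_sector n i z}" using in_sector_basis by auto
  have "(of_nat (dimH n i) :: complex) = (\<Sum>z\<in>{z\<in>basis n. in_sector n i z}. 1)"
    unfolding dimH_def S by simp
  also have "\<dots> = (\<Sum>z\<in>basis n. if in_sector n i z then 1 else 0)"
    unfolding sum.inter_filter[OF finite_basis, symmetric] by simp
  also have "\<dots> = (\<Sum>z\<in>basis n. \<Prod>k<n. if (z!k < 2 \<longleftrightarrow> i!k = Cc) then 1 else 0)"
    by (intro sum.cong refl) (simp add: prod_ind in_sector_def)
  also have "\<dots> = (\<Prod>k<n. \<Sum>a\<in>{0,1,2::nat}. if (a < 2 \<longleftrightarrow> i!k = Cc) then 1 else 0)"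
    unfolding basis_def by (rule sum_prod_lists) simp
  also have "\<dots> = (\<Prod>k<n. if i!k = Cc then 2 else 1)"
    by (intro prod.cong refl) simp
  finally show ?thesis .
qed

lemma dimH_sec:
  assumes "x \<in> basis n"
  shows "(of_nat (dimH n (sec x)) :: complex) * cf n x = 1"
proof -
  have len: "length x = n" using assms unfolding basis_def by auto
  have "(of_nat (dimH n (sec x)) :: complex) * cf n x
      = (\<Prod>k<n. (if sec x!k = Cc then 2 else 1) * (if x!k < 2 then 1/2 else 1))"
    unfolding dimH_formula[OF sec_idx[OF assms]] cf_def by (simp add: prod.distrib)
  also have "\<dots> = 1" using len by (intro prod.neutral) (auto simp: sec_def)
  finally show ?thesis .
qed

lemma dimH_pos:
  assumes "i \<in> idx n"
  shows "(of_nat (dimH n i) :: complex) \<noteq> 0"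
  unfolding dimH_formula[OF assms] by (simp add: prod_zero_iff)

lemma tr_proj:
  "mtr (basis n) (mmul (basis n) (proj n i) X) = (\<Sum>z\<in>basis n. if in_sector n i z then X z z else 0)"
  unfolding mtr_def mmul_def proj_def
  by (intro sum.cong refl) (simp add: if_distrib if_distribR sum.delta finite_basis cong: if_cong)

definition tw :: "nat \<Rightarrow> nat list op \<Rightarrow> nat list op" where
  "tw n X = (\<lambda>x y. \<Sum>i\<in>idx n. mtr (basis n) (mmul (basis n) (proj n i) X) * nproj n i x y)"

lemma tw_basis:
  assumes "x \<in> basis n" "y \<in> basis n"
  shows "tw n X x y = (if x = y then (\<Sum>z\<in>basis n. if sec z = sec x then X z z else 0) * cf n x else 0)"
proof -
  have "tw n X x y = (\<Sum>i\<in>idx n. if i = sec x then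
           mtr (basis n) (mmul (basis n) (proj n i) X) * (if x = y then 1 / of_nat (dimH n i) else 0) else 0)"
    unfolding tw_def nproj_def proj_def
    by (intro sum.cong refl) (auto simp: in_sector_iff[OF assms(1)])
  also have "\<dots> = mtr (basis n) (mmul (basis n) (proj n (sec x)) X) * (if x = y then 1 / of_nat (dimH n (sec x)) else 0)"
    using sec_idx[OF assms(1)] by (simp add: sum.delta' finite_idx)
  also have "\<dots> = (if x = y then (\<Sum>z\<in>basis n. if sec z = sec x then X z z else 0) * cf n x else 0)"
  proof -
    have "inverse (of_nat (dimH n (sec x)) :: complex) = cf n x"
      using dimH_sec[OF assms(1)] by (metis inverse_unique mult.commute)
    moreover have "mtr (basis n) (mmul (basis n) (proj n (sec x)) X) = (\<Sum>z\<in>basis n. if sec z = sec x then X z z else 0)"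
      unfolding tr_proj
      by (intro sum.cong refl) (auto simp: in_sector_iff sec_idx[OF assms(1)])
    ultimately show ?thesis by (cases "x = y") (simp_all add: divide_inverse)
  qed
  finally show ?thesis .
qed

lemma twirl:
  "(\<Sum>P\<in>pauli_grp n. pauli_chan n P X x y) = 16^n * tw n X x y"
proof (cases "x \<in> basis n \<and> y \<in> basis n")
  case True
  then have xb: "x \<in> basis n" and yb: "y \<in> basis n" by auto
  have "(\<Sum>P\<in>pauli_grp n. pauli_chan n P X x y)
      = (\<Sum>P\<in>pauli_grp n. \<Sum>w\<in>basis n. \<Sum>z\<in>basis n. X w z * (pauli_op n P x w * cnj (pauli_op n P y z)))"
    unfolding pauli_chan_def mmul_def madj_def
    by (rule sum.cong[OF refl], simp only: sum_distrib_right, subst sum.swap, simp add: algebra_simps)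
  also have "\<dots> = (\<Sum>w\<in>basis n. \<Sum>z\<in>basis n. X w z * (\<Sum>P\<in>pauli_grp n. pauli_op n P x w * cnj (pauli_op n P y z)))"
    by (simp add: sum_distrib_left sum.swap[of _ "pauli_grp n"])
  also have "\<dots> = (\<Sum>w\<in>basis n. \<Sum>z\<in>basis n. X w z * (16^n * (if x = y \<and> w = z \<and> sec x = sec w then cf n x else 0)))"
    by (intro sum.cong refl) (simp add: pauli_sum xb yb)
  also have "\<dots> = (\<Sum>w\<in>basis n. X w w * (16^n * (if x = y \<and> sec x = sec w then cf n x else 0)))"
  proof (rule sum.cong[OF refl])
    fix w assume w: "w \<in> basis n"
    have "(\<Sum>z\<in>basis n. X w z * (16^n * (if x = y \<and> w = z \<and> sec x = sec w then cf n x else 0)))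
        = (\<Sum>z\<in>basis n. if z = w then X w z * (16^n * (if x = y \<and> sec x = sec w then cf n x else 0)) else 0)"
      by (intro sum.cong refl) auto
    also have "\<dots> = X w w * (16^n * (if x = y \<and> sec x = sec w then cf n x else 0))"
      using w by (simp add: sum.delta' finite_basis)
    finally show "(\<Sum>z\<in>basis n. X w z * (16^n * (if x = y \<and> w = z \<and> sec x = sec w then cf n x else 0)))
        = X w w * (16^n * (if x = y \<and> sec x = sec w then cf n x else 0))" .
  qed
  also have "\<dots> = 16^n * tw n X x y"
    unfolding tw_basis[OF xb yb]
    by (auto simp: sum_distrib_left sum_distrib_right intro!: sum.cong)
  finally show ?thesis .
next
  case False
  have "pauli_chan n P X x y = 0" for P
    using False unfolding pauli_chan_def mmul_def madj_def pauli_op_def by auto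
  moreover have "tw n X x y = 0"
    using False unfolding tw_def by (intro sum.neutral ballI) (auto simp: nproj_def proj_def in_sector_def)
  ultimately show ?thesis by simp
qed



lemma opsp_sum:
  assumes "\<forall>a\<in>F. A a \<in> opsp n"
  shows "(\<lambda>x y. \<Sum>a\<in>F. c a * A a x y) \<in> opsp n"
  using assms unfolding opsp_def supp_on_def by simp

lemma zero_opsp: "(\<lambda>x y. 0) \<in> opsp n"
  unfolding opsp_def supp_on_def by auto

lemma lin_app:
  "linear_on_ops n \<Lambda> \<Longrightarrow> A \<in> opsp n \<Longrightarrow> B \<in> opsp n \<Longrightarrow>
   \<Lambda> (\<lambda>x y. a * A x y + b * B x y) = (\<lambda>x y. a * \<Lambda> A x y + b * \<Lambda> B x y)"
  unfolding linear_on_ops_def by (elim ballE allE) auto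

lemma lin_zero:
  assumes "linear_on_ops n \<Lambda>"
  shows "\<Lambda> (\<lambda>x y. 0) = (\<lambda>x y. 0)"
  using lin_app[OF assms zero_opsp zero_opsp, of 0 0] by simp

lemma lin_sum:
  assumes "linear_on_ops n \<Lambda>" "finite F" "\<forall>a\<in>F. A a \<in> opsp n"
  shows "\<Lambda> (\<lambda>x y. \<Sum>a\<in>F. c a * A a x y) = (\<lambda>x y. \<Sum>a\<in>F. c a * \<Lambda> (A a) x y)"
  using assms(2,3)
proof (induction F rule: finite_induct)
  case empty
  then show ?case using lin_zero[OF assms(1)] by simp
next
  case (insert b F)
  have S: "(\<lambda>x y. \<Sum>a\<in>F. c a * A a x y) \<in> opsp n" using insert by (intro opsp_sum) simp
  have Ab: "A b \<in> opsp n" using insert by simp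
  have "\<Lambda> (\<lambda>x y. \<Sum>a\<in>insert b F. c a * A a x y) = \<Lambda> (\<lambda>x y. c b * A b x y + 1 * (\<Sum>a\<in>F. c a * A a x y))"
    using insert by simp
  also have "\<dots> = (\<lambda>x y. c b * \<Lambda> (A b) x y + 1 * \<Lambda> (\<lambda>x y. \<Sum>a\<in>F. c a * A a x y) x y)"
    by (rule lin_app[OF assms(1) Ab S])
  also have "\<dots> = (\<lambda>x y. \<Sum>a\<in>insert b F. c a * \<Lambda> (A a) x y)"
    using insert by simp
  finally show ?case .
qed

lemma trl_sum:
  "mtr S (mmul S M (\<lambda>x y. \<Sum>a\<in>F. c a * A a x y)) = (\<Sum>a\<in>F. c a * mtr S (mmul S M (A a)))"
proof -
  have "mtr S (mmul S M (\<lambda>x y. \<Sum>a\<in>F. c a * A a x y)) = (\<Sum>x\<in>S. \<Sum>z\<in>S. \<Sum>a\<in>F. c a * (M x z * A a z x))"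
    unfolding mtr_def mmul_def by (simp add: sum_distrib_left algebra_simps)
  also have "\<dots> = (\<Sum>a\<in>F. \<Sum>x\<in>S. \<Sum>z\<in>S. c a * (M x z * A a z x))"
    by (subst sum.swap, rule sum.cong[OF refl], rule sum.swap)
  also have "\<dots> = (\<Sum>a\<in>F. c a * mtr S (mmul S M (A a)))"
    unfolding mtr_def mmul_def by (simp add: sum_distrib_left)
  finally show ?thesis .
qed

lemma tw_sum:
  "tw n (\<lambda>x y. \<Sum>a\<in>F. c a * A a x y) = (\<lambda>x y. \<Sum>a\<in>F. c a * tw n (A a) x y)"
  unfolding tw_def trl_sum
  by (rule ext, rule ext, simp add: sum_distrib_left sum_distrib_right, subst sum.swap, simp add: algebra_simps)

lemma tw_nproj: "tw n (\<Lambda> (nproj n j)) = (\<lambda>x y. \<Sum>i\<in>idx n. Qmat n \<Lambda> i j * nproj n i x y)"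
  unfolding tw_def Qmat_def by simp

lemma pauli_chan_opsp: "pauli_chan n P X \<in> opsp n"
  unfolding opsp_def supp_on_def pauli_chan_def mmul_def madj_def pauli_op_def by auto

lemma nproj_opsp: "nproj n i \<in> opsp n"
  unfolding opsp_def supp_on_def nproj_def proj_def in_sector_def by auto

lemma noisy_seq_opsp:
  assumes "\<forall>A\<in>opsp n. \<Lambda> A \<in> opsp n" "\<rho> \<in> opsp n"
  shows "noisy_seq n \<Lambda> Ps \<rho> \<in> opsp n"
  using assms(2)
proof (induction Ps arbitrary: \<rho>)
  case Nil then show ?case by simp
next
  case (Cons P Ps) then show ?case using pauli_chan_opsp by simp
qed

lemma noisy_seq_snoc:
  "noisy_seq n \<Lambda> (Ps @ [P]) \<rho> = pauli_chan n P (\<Lambda> (noisy_seq n \<Lambda> Ps \<rho>))"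
  by (induction Ps arbitrary: \<rho>) auto

lemma mpow_Suc_left:
  assumes "finite S" "i \<in> S" "j \<in> S"
  shows "mpow S Q (Suc k) i j = (\<Sum>l\<in>S. Q i l * mpow S Q k l j)"
  using assms(2,3)
proof (induction k arbitrary: i j)
  case 0
  then show ?case using assms(1) by (simp add: if_distrib if_distribR sum.delta sum.delta' cong: if_cong)
next
  case (Suc k)
  have "mpow S Q (Suc (Suc k)) i j = (\<Sum>m\<in>S. mpow S Q (Suc k) i m * Q m j)" by simp
  also have "\<dots> = (\<Sum>m\<in>S. (\<Sum>l\<in>S. Q i l * mpow S Q k l m) * Q m j)"
    using Suc by (intro sum.cong refl) simp
  also have "\<dots> = (\<Sum>l\<in>S. Q i l * (\<Sum>m\<in>S. mpow S Q k l m * Q m j))"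
    by (simp add: sum_distrib_left sum_distrib_right algebra_simps, subst sum.swap, simp)
  also have "\<dots> = (\<Sum>l\<in>S. Q i l * mpow S Q (Suc k) l j)" by simp
  finally show ?case .
qed

lemma mtr_comm: "mtr S (mmul S A B) = mtr S (mmul S B A)"
  unfolding mtr_def mmul_def by (subst sum.swap) (simp add: mult.commute)



definition dv :: "nat \<Rightarrow> chan \<Rightarrow> nat list op \<Rightarrow> nat \<Rightarrow> cl list \<Rightarrow> complex" where
  "dv n \<Lambda> \<rho>0 k i = (\<Sum>j\<in>idx n. mpow (idx n) (Qmat n \<Lambda>) k i j * mtr (basis n) (mmul (basis n) (proj n j) (\<Lambda> \<rho>0)))"

lemma dv_Suc:
  assumes "i \<in> idx n"
  shows "dv n \<Lambda> \<rho>0 (Suc k) i = (\<Sum>l\<in>idx n. Qmat n \<Lambda> i l * dv n \<Lambda> \<rho>0 k l)"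
proof -
  have "dv n \<Lambda> \<rho>0 (Suc k) i = (\<Sum>j\<in>idx n. (\<Sum>l\<in>idx n. Qmat n \<Lambda> i l * mpow (idx n) (Qmat n \<Lambda>) k l j) * mtr (basis n) (mmul (basis n) (proj n j) (\<Lambda> \<rho>0)))"
    unfolding dv_def using assms by (intro sum.cong refl) (simp only: mpow_Suc_left[OF finite_idx])
  also have "\<dots> = (\<Sum>l\<in>idx n. Qmat n \<Lambda> i l * dv n \<Lambda> \<rho>0 k l)"
    unfolding dv_def by (simp add: sum_distrib_left sum_distrib_right algebra_simps, subst sum.swap, simp)
  finally show ?thesis .
qed

lemma dv_0:
  assumes "i \<in> idx n"
  shows "dv n \<Lambda> \<rho>0 0 i = mtr (basis n) (mmul (basis n) (proj n i) (\<Lambda> \<rho>0))"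
  unfolding dv_def using assms by (simp add: if_distrib if_distribR sum.delta finite_idx cong: if_cong)

lemma seqs_1: "{Ps. length Ps = Suc 0 \<and> set Ps \<subseteq> A} = (\<lambda>P. [P]) ` A"
  by (auto simp: length_Suc_conv)

lemma seqs_snoc: "{Ps. length Ps = Suc m \<and> set Ps \<subseteq> A} =
   (\<lambda>(Ps, P). Ps @ [P]) ` ({Ps. length Ps = m \<and> set Ps \<subseteq> A} \<times> A)"
proof (rule set_eqI, rule iffI)
  fix Ps assume "Ps \<in> {Ps. length Ps = Suc m \<and> set Ps \<subseteq> A}"
  then have h: "length Ps = Suc m" "set Ps \<subseteq> A" by auto
  then have "Ps = butlast Ps @ [last Ps]" by (metis append_butlast_last_id list.size(3) nat.simps(3))
  moreover have "set (butlast Ps) \<subseteq> A" "last Ps \<in> A" "length (butlast Ps) = m"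
    using h by (auto dest: in_set_butlastD) (metis h(1) last_in_set list.size(3) nat.simps(3) subsetD h(2))
  ultimately show "Ps \<in> (\<lambda>(Ps, P). Ps @ [P]) ` ({Ps. length Ps = m \<and> set Ps \<subseteq> A} \<times> A)"
    by (intro image_eqI[where x = "(butlast Ps, last Ps)"]) auto
qed auto

lemma inj_snoc: "inj_on (\<lambda>(Ps, P). Ps @ [P]) X"
  by (auto simp: inj_on_def)

lemma G_formula:
  assumes lin: "linear_on_ops n \<Lambda>" and pres: "\<forall>A\<in>opsp n. \<Lambda> A \<in> opsp n" and r: "\<rho>0 \<in> opsp n"
  shows "(\<lambda>x y. \<Sum>Ps\<in>{Ps. length Ps = Suc k \<and> set Ps \<subseteq> pauli_grp n}. noisy_seq n \<Lambda> Ps \<rho>0 x y)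
       = (\<lambda>x y. \<Sum>i\<in>idx n. ((16::complex)^n)^(Suc k) * dv n \<Lambda> \<rho>0 k i * nproj n i x y)"
proof (induction k)
  case 0
  have "(\<lambda>x y. \<Sum>Ps\<in>{Ps. length Ps = Suc 0 \<and> set Ps \<subseteq> pauli_grp n}. noisy_seq n \<Lambda> Ps \<rho>0 x y)
      = (\<lambda>x y. \<Sum>P\<in>pauli_grp n. pauli_chan n P (\<Lambda> \<rho>0) x y)"
    unfolding seqs_1 by (subst sum.reindex) (auto simp: inj_on_def)
  also have "\<dots> = (\<lambda>x y. 16^n * tw n (\<Lambda> \<rho>0) x y)" by (simp add: twirl)
  also have "\<dots> = (\<lambda>x y. \<Sum>i\<in>idx n. ((16::complex)^n)^(Suc 0) * dv n \<Lambda> \<rho>0 0 i * nproj n i x y)"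
    unfolding tw_def by (simp add: dv_0 sum_distrib_left algebra_simps cong: sum.cong)
  finally show ?case .
next
  case (Suc k)
  let ?S = "\<lambda>m. {Ps. length Ps = m \<and> set Ps \<subseteq> pauli_grp n}"
  let ?N = "(16::complex)^n"
  have nso: "\<forall>Ps\<in>?S (Suc k). noisy_seq n \<Lambda> Ps \<rho>0 \<in> opsp n" using noisy_seq_opsp[OF pres r] by blast
  have "(\<lambda>x y. \<Sum>Ps\<in>?S (Suc (Suc k)). noisy_seq n \<Lambda> Ps \<rho>0 x y)
      = (\<lambda>x y. \<Sum>Ps\<in>?S (Suc k). \<Sum>P\<in>pauli_grp n. pauli_chan n P (\<Lambda> (noisy_seq n \<Lambda> Ps \<rho>0)) x y)"
    unfolding seqs_snoc[of "Suc k"]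
    by (subst sum.reindex[OF inj_snoc]) (simp add: sum.cartesian_product noisy_seq_snoc case_prod_beta)
  also have "\<dots> = (\<lambda>x y. \<Sum>Ps\<in>?S (Suc k). 1 * (?N * tw n (\<Lambda> (noisy_seq n \<Lambda> Ps \<rho>0)) x y))"
    by (simp add: twirl)
  also have "\<dots> = (\<lambda>x y. ?N * tw n (\<Lambda> (\<lambda>x y. \<Sum>Ps\<in>?S (Suc k). 1 * noisy_seq n \<Lambda> Ps \<rho>0 x y)) x y)"
  proof -
    have fin: "finite (?S (Suc k))"
    proof -
      have "finite (pauli_grp n)" unfolding pauli_grp_eq lists_set_eq by (rule finite_lists_length_eq[OF finite_pauli1])
      then show ?thesis unfolding lists_set_eq by (rule finite_lists_length_eq)
    qed
    show ?thesis unfolding lin_sum[OF lin fin nso] tw_sum by (simp add: sum_distrib_left)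
  qed
  also have "\<dots> = (\<lambda>x y. ?N * tw n (\<Lambda> (\<lambda>x y. \<Sum>i\<in>idx n. (?N^(Suc k) * dv n \<Lambda> \<rho>0 k i) * nproj n i x y)) x y)"
    using Suc by (simp add: mult.assoc)
  also have "\<dots> = (\<lambda>x y. ?N * (\<Sum>i\<in>idx n. (?N^(Suc k) * dv n \<Lambda> \<rho>0 k i) * (\<Sum>i'\<in>idx n. Qmat n \<Lambda> i' i * nproj n i' x y)))"
    by (simp add: lin_sum[OF lin finite_idx] nproj_opsp tw_sum tw_nproj)
  also have "\<dots> = (\<lambda>x y. \<Sum>i'\<in>idx n. ?N^(Suc (Suc k)) * (\<Sum>i\<in>idx n. Qmat n \<Lambda> i' i * dv n \<Lambda> \<rho>0 k i) * nproj n i' x y)"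
    apply (rule ext, rule ext)
    apply (simp add: sum_distrib_left sum_distrib_right)
    apply (subst sum.swap)
    apply (simp add: algebra_simps)
    done
  also have "\<dots> = (\<lambda>x y. \<Sum>i\<in>idx n. ?N^(Suc (Suc k)) * dv n \<Lambda> \<rho>0 (Suc k) i * nproj n i x y)"
    by (simp add: dv_Suc cong: sum.cong)
  finally show ?case .
qed



lemma card_pauli: "card (pauli_grp n) = 16^n"
proof -
  have "card pauli1 = 16" unfolding pauli1_def by simp
  then show ?thesis unfolding pauli_grp_eq lists_set_eq using card_lists_length_eq[OF finite_pauli1] by simp
qed

lemma finite_seqs: "finite {Ps. length Ps = m \<and> set Ps \<subseteq> pauli_grp n}"
proof -
  have "finite (pauli_grp n)" unfolding pauli_grp_eq lists_set_eq by (rule finite_lists_length_eq[OF finite_pauli1])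
  then show ?thesis unfolding lists_set_eq by (rule finite_lists_length_eq)
qed

lemma lrb_formula:
  assumes lin: "linear_on_ops n \<Lambda>" and pres: "\<forall>A\<in>opsp n. \<Lambda> A \<in> opsp n" and r: "\<rho>0 \<in> opsp n"
  shows "lrb_avg n \<Lambda> E \<rho>0 (Suc k) =
              (\<Sum>i\<in>idx n. \<Sum>j\<in>idx n.
                  mtr (basis n) (mmul (basis n) (nproj n i) E)
                  * mpow (idx n) (Qmat n \<Lambda>) k i j
                  * mtr (basis n) (mmul (basis n) (proj n j) (\<Lambda> \<rho>0)))"
proof -
  let ?S = "{Ps. length Ps = Suc k \<and> set Ps \<subseteq> pauli_grp n}"
  let ?N = "(16::complex)^n"
  have "(\<Sum>Ps\<in>?S. mtr (basis n) (mmul (basis n) E (noisy_seq n \<Lambda> Ps \<rho>0)))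
      = mtr (basis n) (mmul (basis n) E (\<lambda>x y. \<Sum>Ps\<in>?S. 1 * noisy_seq n \<Lambda> Ps \<rho>0 x y))"
    unfolding trl_sum by simp
  also have "\<dots> = mtr (basis n) (mmul (basis n) E (\<lambda>x y. \<Sum>i\<in>idx n. (?N^(Suc k) * dv n \<Lambda> \<rho>0 k i) * nproj n i x y))"
    using G_formula[OF lin pres r, of k] by (simp add: mult.assoc)
  also have "\<dots> = (\<Sum>i\<in>idx n. (?N^(Suc k) * dv n \<Lambda> \<rho>0 k i) * mtr (basis n) (mmul (basis n) E (nproj n i)))"
    by (rule trl_sum)
  finally have 1: "(\<Sum>Ps\<in>?S. mtr (basis n) (mmul (basis n) E (noisy_seq n \<Lambda> Ps \<rho>0)))
      = ?N^(Suc k) * (\<Sum>i\<in>idx n. dv n \<Lambda> \<rho>0 k i * mtr (basis n) (mmul (basis n) (nproj n i) E))"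
    by (simp add: sum_distrib_left mtr_comm[of _ E] algebra_simps)
  have "lrb_avg n \<Lambda> E \<rho>0 (Suc k) = (\<Sum>i\<in>idx n. dv n \<Lambda> \<rho>0 k i * mtr (basis n) (mmul (basis n) (nproj n i) E))"
    unfolding lrb_avg_def 1 card_pauli by simp
  also have "\<dots> = (\<Sum>i\<in>idx n. \<Sum>j\<in>idx n.
                  mtr (basis n) (mmul (basis n) (nproj n i) E)
                  * mpow (idx n) (Qmat n \<Lambda>) k i j
                  * mtr (basis n) (mmul (basis n) (proj n j) (\<Lambda> \<rho>0)))"
    unfolding dv_def by (simp add: sum_distrib_left sum_distrib_right algebra_simps)
  finally show ?thesis .
qed

lemma sum_times1: "(\<Sum>p\<in>{0..<1::nat} \<times> S. f p) = (\<Sum>x\<in>S. f (0, x))"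
proof -
  have "{0..<1::nat} \<times> S = Pair 0 ` S" by auto
  then show ?thesis by (simp add: sum.reindex inj_on_def)
qed

lemma state_image:
  assumes "cptp n \<Lambda>" "is_state n \<rho>0"
  shows "is_state n (\<Lambda> \<rho>0)"
proof -
  have r: "\<rho>0 \<in> opsp n" and psd0: "psd_on (basis n) \<rho>0" and tr0: "mtr (basis n) \<rho>0 = 1"
    using assms(2) unfolding is_state_def by auto
  have pres: "\<forall>A\<in>opsp n. \<Lambda> A \<in> opsp n" and cp: "completely_positive n \<Lambda>" and tp: "trace_preserving n \<Lambda>"
    using assms(1) unfolding cptp_def by auto
  define X :: "(nat \<times> nat list) op" where "X = (\<lambda>(a,x) (b,y). if a = 0 \<and> b = 0 then \<rho>0 x y else 0)"
  have supp: "supp_on ({0..<1} \<times> basis n) X"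
    using r unfolding X_def supp_on_def opsp_def by auto
  have psdX: "psd_on ({0..<1} \<times> basis n) X"
    unfolding psd_on_def Let_def
  proof
    fix v :: "nat \<times> nat list \<Rightarrow> complex"
    have e: "(\<Sum>p\<in>{0..<1} \<times> basis n. \<Sum>q\<in>{0..<1} \<times> basis n. cnj (v p) * X p q * v q)
        = (\<Sum>x\<in>basis n. \<Sum>y\<in>basis n. cnj (v (0,x)) * \<rho>0 x y * v (0,y))"
      unfolding sum_times1 X_def by simp
    show "Im (\<Sum>p\<in>{0..<1} \<times> basis n. \<Sum>q\<in>{0..<1} \<times> basis n. cnj (v p) * X p q * v q) = 0 \<and>
          0 \<le> Re (\<Sum>p\<in>{0..<1} \<times> basis n. \<Sum>q\<in>{0..<1} \<times> basis n. cnj (v p) * X p q * v q)"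
      unfolding e using psd0 unfolding psd_on_def Let_def by (rule allE[where x = "\<lambda>x. v (0,x)"])
  qed
  have psdA: "psd_on ({0..<1} \<times> basis n) (ampl \<Lambda> X)"
    using cp supp psdX unfolding completely_positive_def by blast
  have amplX: "ampl \<Lambda> X (0,x) (0,y) = \<Lambda> \<rho>0 x y" for x y
    unfolding ampl_def X_def by simp
  have "psd_on (basis n) (\<Lambda> \<rho>0)"
    unfolding psd_on_def Let_def
  proof
    fix v :: "nat list \<Rightarrow> complex"
    have e: "(\<Sum>p\<in>{0..<1} \<times> basis n. \<Sum>q\<in>{0..<1} \<times> basis n. cnj ((\<lambda>(a,x). v x) p) * ampl \<Lambda> X p q * (\<lambda>(a,x). v x) q)
        = (\<Sum>x\<in>basis n. \<Sum>y\<in>basis n. cnj (v x) * \<Lambda> \<rho>0 x y * v y)"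
      unfolding sum_times1 amplX by simp
    show "Im (\<Sum>x\<in>basis n. \<Sum>y\<in>basis n. cnj (v x) * \<Lambda> \<rho>0 x y * v y) = 0 \<and>
          0 \<le> Re (\<Sum>x\<in>basis n. \<Sum>y\<in>basis n. cnj (v x) * \<Lambda> \<rho>0 x y * v y)"
      using psdA unfolding psd_on_def Let_def e[symmetric] by blast
  qed
  moreover have "\<Lambda> \<rho>0 \<in> opsp n" using pres r by blast
  moreover have "mtr (basis n) (\<Lambda> \<rho>0) = 1" using tp r tr0 unfolding trace_preserving_def by simp
  ultimately show ?thesis unfolding is_state_def by simp
qed



abbreviation cn :: "nat \<Rightarrow> cl list" where "cn n \<equiv> replicate n Cc"

lemma cn_idx: "cn n \<in> idx n" unfolding idx_def by simp

lemma dimH_cn: "(of_nat (dimH n (cn n)) :: complex) = 2^n"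
  unfolding dimH_formula[OF cn_idx] by simp

lemma nPi_c_eq: "nPi_c n = nproj n (cn n)"
  unfolding nPi_c_def nproj_def Pi_c_def dimH_cn by simp

lemma dimH_sum:
  "(\<Sum>z\<in>basis n. if in_sector n i z then 1 else 0) = (of_nat (dimH n i) :: complex)"
proof -
  have S: "{z. in_sector n i z} = {z\<in>basis n. in_sector n i z}" using in_sector_basis by auto
  show ?thesis unfolding dimH_def S sum.inter_filter[OF finite_basis, symmetric] by simp
qed

lemma mtr_nproj: "i \<in> idx n \<Longrightarrow> mtr (basis n) (nproj n i) = 1"
  unfolding mtr_def nproj_def proj_def
  using dimH_sum[of n i] dimH_pos[of i n]
  by (simp add: sum_divide_distrib[symmetric] cong: if_cong)

lemma mtr_idop_minus:
  "mtr (basis n) (mmul (basis n) (\<lambda>x y. idop n x y - M x y) Y) = mtr (basis n) Y - mtr (basis n) (mmul (basis n) M Y)"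
proof -
  have "(\<Sum>z\<in>basis n. (idop n x z - M x z) * Y z x) = Y x x - (\<Sum>z\<in>basis n. M x z * Y z x)"
    if x: "x \<in> basis n" for x
  proof -
    have "(\<Sum>z\<in>basis n. idop n x z * Y z x) = (\<Sum>z\<in>basis n. if z = x then Y x x else 0)"
      using x unfolding idop_def by (intro sum.cong refl) auto
    also have "\<dots> = Y x x" using x by (simp add: sum.delta' finite_basis)
    finally show ?thesis by (simp add: left_diff_distrib sum_subtractf)
  qed
  then show ?thesis unfolding mtr_def mmul_def by (simp add: sum_subtractf)
qed

lemma L_formula:
  assumes "cptp n \<Lambda>"
  shows "L_ave n \<Lambda> = 1 - Qmat n \<Lambda> (cn n) (cn n)"
proof -
  have tp: "trace_preserving n \<Lambda>" using assms unfolding cptp_def by auto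
  have "L_ave n \<Lambda> = mtr (basis n) (\<Lambda> (nproj n (cn n))) - Qmat n \<Lambda> (cn n) (cn n)"
    unfolding L_ave_def Pi_l_def nPi_c_eq mtr_idop_minus Qmat_def Pi_c_def ..
  also have "mtr (basis n) (\<Lambda> (nproj n (cn n))) = 1"
    using tp nproj_opsp mtr_nproj[OF cn_idx] unfolding trace_preserving_def by simp
  finally show ?thesis .
qed

lemma Pi_l_decomp:
  "Pi_l n x y = (\<Sum>i\<in>idx n - {cn n}. of_nat (dimH n i) * nproj n i x y)"
proof -
  have "(\<Sum>i\<in>idx n - {cn n}. of_nat (dimH n i) * nproj n i x y) = (\<Sum>i\<in>idx n - {cn n}. proj n i x y)"
    using dimH_pos unfolding nproj_def by (intro sum.cong refl) simp
  also have "\<dots> = Pi_l n x y"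
  proof (cases "x = y \<and> x \<in> basis n")
    case True
    then have "(\<Sum>i\<in>idx n - {cn n}. proj n i x y) = (\<Sum>i\<in>idx n - {cn n}. if i = sec x then 1 else 0)"
      unfolding proj_def by (intro sum.cong refl) (auto simp: in_sector_iff)
    also have "\<dots> = (if sec x \<in> idx n - {cn n} then 1 else 0)"
      by (simp add: sum.delta' finite_idx)
    also have "\<dots> = Pi_l n x y"
      using True sec_idx[of x n] unfolding Pi_l_def idop_def Pi_c_def proj_def
      by (auto simp: in_sector_iff[OF _ cn_idx])
    finally show ?thesis .
  next
    case False
    have "(\<Sum>i\<in>idx n - {cn n}. proj n i x y) = 0"
      using False unfolding proj_def in_sector_def by (intro sum.neutral) auto
    moreover have "Pi_l n x y = 0"
      using False unfolding Pi_l_def idop_def Pi_c_def proj_def in_sector_def by auto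
    ultimately show ?thesis by simp
  qed
  finally show ?thesis by simp
qed

lemma S_formula:
  assumes "cptp n \<Lambda>"
  shows "S_ave n \<Lambda> = (1 / (3 ^ n - 2 ^ n)) *
            (\<Sum>i\<in>idx n - {replicate n Cc}. of_nat (dimH n i) * Qmat n \<Lambda> (replicate n Cc) i)"
proof -
  have lin: "linear_on_ops n \<Lambda>" using assms unfolding cptp_def by auto
  let ?D = "(3::complex) ^ n - 2 ^ n"
  have eq: "nPi_l n = (\<lambda>x y. \<Sum>i\<in>idx n - {cn n}. (of_nat (dimH n i) / ?D) * nproj n i x y)"
    unfolding nPi_l_def Pi_l_decomp by (simp add: sum_divide_distrib)
  have "\<Lambda> (nPi_l n) = (\<lambda>x y. \<Sum>i\<in>idx n - {cn n}. (of_nat (dimH n i) / ?D) * \<Lambda> (nproj n i) x y)"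
    unfolding eq by (rule lin_sum[OF lin]) (auto intro: finite_idx nproj_opsp)
  then have "S_ave n \<Lambda> = (\<Sum>i\<in>idx n - {cn n}. (of_nat (dimH n i) / ?D) * Qmat n \<Lambda> (cn n) i)"
    unfolding S_ave_def Pi_c_def Qmat_def by (simp only: trl_sum)
  also have "\<dots> = (1 / ?D) * (\<Sum>i\<in>idx n - {cn n}. of_nat (dimH n i) * Qmat n \<Lambda> (cn n) i)"
    by (simp add: sum_distrib_left)
  finally show ?thesis .
qed

theorem theorem1:
  fixes n :: nat and \<Lambda> :: chan and \<rho>0 E :: "nat list op"
  assumes "n \<ge> 1"
    and "cptp n \<Lambda>"
    and "is_state n \<rho>0"
    and "E \<in> opsp n" and "hermitian_on (basis n) E"
  shows "(\<exists>\<rho>t. is_state n \<rho>t \<and>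
           (\<forall>m\<ge>1. lrb_avg n \<Lambda> E \<rho>0 m =
              (\<Sum>i\<in>idx n. \<Sum>j\<in>idx n.
                  mtr (basis n) (mmul (basis n) (nproj n i) E)
                  * mpow (idx n) (Qmat n \<Lambda>) (m - 1) i j
                  * mtr (basis n) (mmul (basis n) (proj n j) \<rho>t))))
       \<and> L_ave n \<Lambda> = 1 - Qmat n \<Lambda> (replicate n Cc) (replicate n Cc)
       \<and> S_ave n \<Lambda> = (1 / (3 ^ n - 2 ^ n)) *
            (\<Sum>i\<in>idx n - {replicate n Cc}. of_nat (dimH n i) * Qmat n \<Lambda> (replicate n Cc) i)"
proof (intro conjI)
  have lin: "linear_on_ops n \<Lambda>" and pres: "\<forall>A\<in>opsp n. \<Lambda> A \<in> opsp n"
    using assms(2) unfolding cptp_def by auto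
  have r: "\<rho>0 \<in> opsp n" using assms(3) unfolding is_state_def by auto
  show "\<exists>\<rho>t. is_state n \<rho>t \<and>
           (\<forall>m\<ge>1. lrb_avg n \<Lambda> E \<rho>0 m =
              (\<Sum>i\<in>idx n. \<Sum>j\<in>idx n.
                  mtr (basis n) (mmul (basis n) (nproj n i) E)
                  * mpow (idx n) (Qmat n \<Lambda>) (m - 1) i j
                  * mtr (basis n) (mmul (basis n) (proj n j) \<rho>t)))"
  proof (intro exI conjI allI impI)
    show "is_state n (\<Lambda> \<rho>0)" by (rule state_image[OF assms(2,3)])
  next
    fix m :: nat assume "m \<ge> 1"
    then obtain k where m: "m = Suc k" by (cases m) auto
    show "lrb_avg n \<Lambda> E \<rho>0 m =
              (\<Sum>i\<in>idx n. \<Sum>j\<in>idx n.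
                  mtr (basis n) (mmul (basis n) (nproj n i) E)
                  * mpow (idx n) (Qmat n \<Lambda>) (m - 1) i j
                  * mtr (basis n) (mmul (basis n) (proj n j) (\<Lambda> \<rho>0)))"
      unfolding m using lrb_formula[OF lin pres r] by simp
  qed
  show "L_ave n \<Lambda> = 1 - Qmat n \<Lambda> (replicate n Cc) (replicate n Cc)" by (rule L_formula[OF assms(2)])
  show "S_ave n \<Lambda> = (1 / (3 ^ n - 2 ^ n)) *
            (\<Sum>i\<in>idx n - {replicate n Cc}. of_nat (dimH n i) * Qmat n \<Lambda> (replicate n Cc) i)"
    by (rule S_formula[OF assms(2)])
qed

end
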